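(* Let $\mathcal D\subset\mathbb R^n$ be nonempty, compact and convex, let $f$ be differentiable and $\mu$-strongly convex with minimizer $\mathbf x^*$ over $\mathcal D$ and $f^*=f(\mathbf x^* )$, and let $c>0$, $0<p\le1$. Let $(\mathbf x_k,\bar{\mathbf s}_k)$ be generated by the averaged Frank–Wolfe method (defined in the context). If $f(\mathbf x_k)-f^*=O(k^{-q})$ for some $q>0$, then there is a constant $C>0$ such that $\|\bar{\mathbf s}_k-\mathbf x_k\|_2^2\le C\max\{k^{-(q/2+p-1)},\,k^{-2p}\}$.
   Context: $\mathrm{LMO}_{\mathcal D}(x)\in\arg\min_{s\in\mathcal D}\nabla f(x)^Ts$. The averaged Frank–Wolfe method: given $\mathbf x_0\in\mathcal D$ and arbitrary $\bar{\mathbf s}_{-1}\in\mathcal D$, for $k=0,1,\dots$ set $\mathbf s_k=\mathrm{LMO}_{\mathcal D}(\mathbf x_k)$, $\bar{\mathbf s}_k=\bar{\mathbf s}_{k-1}+\beta_k(\mathbf s_k-\bar{\mathbf s}_{k-1})$, $\mathbf x_{k+1}=\mathbf x_k+\gamma_k(\bar{\mathbf s}_k-\mathbf x_k)$ with $\gamma_k=\frac{c}{c+k}$, $\beta_k=\left(\frac{c}{c+k}\right)^p$. *)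

theory Defs
  imports "HOL-Analysis.Analysis" "HOL-Library.Landau_Symbols"
begin

definition strongly_convex_on :: "real \<Rightarrow> ('a::real_normed_vector) set \<Rightarrow> ('a \<Rightarrow> real) \<Rightarrow> bool" where
  "strongly_convex_on \<mu> D f \<longleftrightarrow>
     (\<forall>x\<in>D. \<forall>y\<in>D. \<forall>t::real. 0 \<le> t \<and> t \<le> 1 \<longrightarrow>
        f (t *\<^sub>R x + (1 - t) *\<^sub>R y) \<le> t * f x + (1 - t) * f y - \<mu> / 2 * t * (1 - t) * (norm (x - y))\<^sup>2)"

end

theory Submission
  imports Defs
begin


lemma core:
  fixes d X :: "nat \<Rightarrow> 'a::real_normed_vector"
  assumes c: "c > 0"
    and XS: "\<forall>j. X (Suc j) = X j + (c / (c + real j)) *\<^sub>R d j"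
    and dB: "\<forall>k j. 1 \<le> k \<longrightarrow> k \<le> j \<longrightarrow> norm (d (Suc j) - d j) \<le> B * real k powr (-p)"
    and XE: "\<forall>j\<ge>1. norm (X j) \<le> E * real j powr (-q/2)"
    and B: "B \<ge> 0" and E: "E \<ge> 0" and q: "q > 0"
    and k: "k \<ge> 1" and L: "L \<ge> 1" "L \<le> k"
  shows "norm (d k) \<le> (2*E*(c+2)/c) * real k powr (1 - q/2) / real L + real L * (B * real k powr (-p))"
proof -
  define b where "b = B * real k powr (-p)"
  have b0: "b \<ge> 0" using B by (simp add: b_def)
  have drift: "norm (d (k+i) - d k) \<le> real i * b" for i
  proof (induction i)
    case 0 then show ?case by simp
  next
    case (Suc i)
    have "norm (d (Suc (k+i)) - d (k+i)) \<le> b" using dB k unfolding b_def by auto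
    moreover have "norm (d (k + Suc i) - d k) \<le> norm (d (Suc (k+i)) - d (k+i)) + norm (d (k+i) - d k)"
    proof -
      have "d (k + Suc i) - d k = (d (Suc (k+i)) - d (k+i)) + (d (k+i) - d k)" by simp
      then show ?thesis by (metis norm_triangle_ineq)
    qed
    ultimately show ?case using Suc by (simp add: algebra_simps)
  qed
  define g where "g j = c / (c + real j)" for j
  have Xsum: "X (k+i) - X k = (\<Sum>j<i. g (k+j) *\<^sub>R d (k+j))" for i
  proof (induction i)
    case 0 then show ?case by simp
  next
    case (Suc i)
    then show ?case using XS by (simp add: g_def algebra_simps)
  qed
  define G where "G = (\<Sum>j<L. g (k+j))"
  have gpos: "g j > 0" for j using c by (simp add: g_def)
  have glow: "g (k+j) \<ge> c / ((c+2) * real k)" if "j < L" for j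
  proof -
    have "real j \<le> real k" using that L by simp
    moreover have "c \<le> c * real k" using c k by simp
    ultimately have "c + real (k+j) \<le> (c+2) * real k" by (simp add: algebra_simps)
    moreover have "c + real (k+j) > 0" using c by simp
    ultimately show ?thesis unfolding g_def using c by (simp add: frac_le)
  qed
  have Glow: "G \<ge> real L * (c / ((c+2) * real k))"
  proof -
    have "(\<Sum>j<L. c / ((c+2) * real k)) \<le> G" unfolding G_def by (rule sum_mono) (use glow in auto)
    then show ?thesis by simp
  qed
  have Gpos: "G > 0"
  proof -
    have "real L * (c / ((c+2) * real k)) > 0" using L k c by simp
    then show ?thesis using Glow by linarith
  qed
  have split: "(\<Sum>j<L. g (k+j) *\<^sub>R d (k+j)) = G *\<^sub>R d k + (\<Sum>j<L. g (k+j) *\<^sub>R (d (k+j) - d k))"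
    by (simp add: G_def scaleR_sum_left scaleR_diff_right sum_subtractf)
  have n2: "norm (\<Sum>j<L. g (k+j) *\<^sub>R (d (k+j) - d k)) \<le> G * (real L * b)"
  proof -
    have "norm (\<Sum>j<L. g (k+j) *\<^sub>R (d (k+j) - d k)) \<le> (\<Sum>j<L. norm (g (k+j) *\<^sub>R (d (k+j) - d k)))"
      by (rule norm_sum)
    also have "\<dots> \<le> (\<Sum>j<L. g (k+j) * (real L * b))"
    proof (rule sum_mono)
      fix j assume "j \<in> {..<L}"
      then have "real j * b \<le> real L * b" using b0 by (simp add: mult_right_mono)
      then have "norm (d (k+j) - d k) \<le> real L * b" using drift[of j] by linarith
      then show "norm (g (k+j) *\<^sub>R (d (k+j) - d k)) \<le> g (k+j) * (real L * b)"
        using gpos[of "k+j"] by (simp add: mult_left_mono)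
    qed
    also have "\<dots> = G * (real L * b)" by (simp add: G_def sum_distrib_right)
    finally show ?thesis .
  qed
  have kq: "real (k+L) powr (-q/2) \<le> real k powr (-q/2)"
    by (rule powr_mono2') (use q k in auto)
  have nX: "norm (X (k+L) - X k) \<le> 2 * E * real k powr (-q/2)"
  proof -
    have "norm (X (k+L) - X k) \<le> norm (X (k+L)) + norm (X k)" by (rule norm_triangle_ineq4)
    also have "\<dots> \<le> E * real (k+L) powr (-q/2) + E * real k powr (-q/2)"
      using XE k spec[OF XE, of "k+L"] by (intro add_mono) auto
    also have "\<dots> \<le> 2 * E * real k powr (-q/2)" using mult_left_mono[OF kq E] by simp
    finally show ?thesis .
  qed
  have "G *\<^sub>R d k = (X (k+L) - X k) - (\<Sum>j<L. g (k+j) *\<^sub>R (d (k+j) - d k))"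
    using Xsum[of L] split by simp
  then have "norm (G *\<^sub>R d k) \<le> norm (X (k+L) - X k) + norm (\<Sum>j<L. g (k+j) *\<^sub>R (d (k+j) - d k))"
    by (metis norm_triangle_ineq4)
  moreover have "norm (G *\<^sub>R d k) = G * norm (d k)" using Gpos by simp
  ultimately have "G * norm (d k) \<le> 2 * E * real k powr (-q/2) + G * (real L * b)"
    using nX n2 by linarith
  then have "norm (d k) \<le> 2 * E * real k powr (-q/2) / G + real L * b"
    using Gpos by (simp add: field_simps)
  also have "2 * E * real k powr (-q/2) / G \<le> 2 * E * real k powr (-q/2) / (real L * (c / ((c+2) * real k)))"
    using Glow E c k L Gpos by (intro divide_left_mono) auto
  also have "2 * E * real k powr (-q/2) / (real L * (c / ((c+2) * real k))) = (2*E*(c+2)/c) * (real k powr (-q/2) * real k) / real L"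
    using c k L by (simp add: field_simps)
  also have "real k powr (-q/2) * real k = real k powr (1 - q/2)"
    using k by (simp add: powr_diff powr_minus_divide)
  finally show ?thesis unfolding b_def by simp
qed



lemma choose_L:
  fixes A B p q :: real and k :: nat
  assumes A: "A \<ge> 0" and B: "B \<ge> 0" and p: "p > 0" "p \<le> 1" and q: "q > 0" and k: "k \<ge> 1"
  shows "\<exists>L::nat. 1 \<le> L \<and> L \<le> k \<and>
     (A * real k powr (1 - q/2) / real L + real L * (B * real k powr (-p)))\<^sup>2
       \<le> (A + 2*B)\<^sup>2 * max (real k powr (- (q / 2 + p - 1))) (real k powr (- 2 * p))"
proof -
  define e where "e = (1 + p - q/2) / 2"
  define m where "m = (1 - q/2 - p) / 2"
  define t where "t = real k powr e"
  have kpos: "real k > 0" using k by simp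
  have tpos: "t > 0" unfolding t_def using kpos by simp
  have km: "real k powr m \<ge> 0" by simp
  have m2: "real k powr m * real k powr m = real k powr (- (q / 2 + p - 1))"
    by (simp add: powr_add[symmetric] m_def algebra_simps)
  show ?thesis
  proof (cases "t \<ge> 1")
    case True
    define L where "L = nat \<lceil>t\<rceil>"
    have Lt: "real L \<ge> t" unfolding L_def by linarith
    have Lt2: "real L \<le> 2 * t" unfolding L_def using True by linarith
    have "e \<le> 1" unfolding e_def using p q by simp
    then have "t \<le> real k powr 1" unfolding t_def using k by (intro powr_mono) auto
    then have tk: "t \<le> real k" using kpos by simp
    have Lk: "L \<le> k" unfolding L_def using tk by (simp add: ceiling_le nat_le_iff)
    have L1: "L \<ge> 1" using Lt True by linarith
    have e1: "real k powr (1 - q/2) / t = real k powr m"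
    proof -
      have "1 - q/2 - e = m" unfolding e_def m_def by (simp add: field_simps)
      then show ?thesis unfolding t_def by (metis powr_diff)
    qed
    have e2: "t * real k powr (-p) = real k powr m"
    proof -
      have "e + (-p) = m" unfolding e_def m_def by (simp add: field_simps)
      then show ?thesis unfolding t_def by (metis powr_add)
    qed
    have s1: "A * real k powr (1 - q/2) / real L \<le> A * real k powr m"
    proof -
      have "A * real k powr (1 - q/2) / real L \<le> A * real k powr (1 - q/2) / t"
        using Lt tpos A by (intro divide_left_mono) auto
      also have "\<dots> = A * real k powr m" using e1 by (metis times_divide_eq_right)
      finally show ?thesis .
    qed
    have s2: "real L * (B * real k powr (-p)) \<le> 2 * B * real k powr m"
    proof -
      have "real L * (B * real k powr (-p)) \<le> (2 * t) * (B * real k powr (-p))"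
        using Lt2 B by (intro mult_right_mono) auto
      also have "\<dots> = 2 * B * (t * real k powr (-p))" by simp
      finally show ?thesis using e2 by simp
    qed
    define S where "S = A * real k powr (1 - q/2) / real L + real L * (B * real k powr (-p))"
    have S0: "S \<ge> 0" unfolding S_def using A B by simp
    have "S \<le> (A + 2*B) * real k powr m" unfolding S_def using s1 s2 by (simp add: algebra_simps)
    then have "S\<^sup>2 \<le> ((A + 2*B) * real k powr m)\<^sup>2" using S0 by (intro power_mono) auto
    also have "\<dots> = (A + 2*B)\<^sup>2 * (real k powr m * real k powr m)" by (simp add: power2_eq_square)
    also have "\<dots> \<le> (A + 2*B)\<^sup>2 * max (real k powr (- (q / 2 + p - 1))) (real k powr (- 2 * p))"
      unfolding m2 by (intro mult_left_mono) auto
    finally show ?thesis using L1 Lk unfolding S_def by blast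
  next
    case False
    have t2: "t * t \<le> 1" using False tpos by (simp add: mult_le_one)
    have "real k powr (1 - q/2) = (t * t) * real k powr (-p)"
    proof -
      have "(e + e) + (-p) = 1 - q/2" unfolding e_def by (simp add: field_simps)
      then show ?thesis unfolding t_def by (metis powr_add)
    qed
    then have kk: "real k powr (1 - q/2) \<le> real k powr (-p)"
      using t2 by (simp add: mult_left_le_one_le)
    define S where "S = A * real k powr (1 - q/2) / real (1::nat) + real (1::nat) * (B * real k powr (-p))"
    have S0: "S \<ge> 0" unfolding S_def using A B by simp
    have "S \<le> (A + 2*B) * real k powr (-p)" unfolding S_def
    proof -
      have "0 \<le> B * real k powr (-p)" using B by simp
      then show "A * real k powr (1 - q / 2) / real (1::nat) + real (1::nat) * (B * real k powr - p)
          \<le> (A + 2 * B) * real k powr - p" using mult_left_mono[OF kk A] by (simp add: algebra_simps)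
    qed
    then have "S\<^sup>2 \<le> ((A + 2*B) * real k powr (-p))\<^sup>2" using S0 by (intro power_mono) auto
    also have "\<dots> = (A + 2*B)\<^sup>2 * (real k powr (- 2 * p))"
      by (simp add: power2_eq_square powr_add[symmetric])
    also have "\<dots> \<le> (A + 2*B)\<^sup>2 * max (real k powr (- (q / 2 + p - 1))) (real k powr (- 2 * p))"
      by (intro mult_left_mono) auto
    finally have "S\<^sup>2 \<le> (A + 2*B)\<^sup>2 * max (real k powr (- (q / 2 + p - 1))) (real k powr (- 2 * p))" .
    then show ?thesis using k unfolding S_def by (intro exI[of _ 1]) auto
  qed
qed



theorem corollary3:
  fixes D :: "(real ^ 'n) set"
    and f :: "real ^ 'n \<Rightarrow> real"
    and grad :: "real ^ 'n \<Rightarrow> real ^ 'n"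
    and \<mu> c p q :: real
    and xstar sbm1 :: "real ^ 'n"
    and x s sbar :: "nat \<Rightarrow> real ^ 'n"
  assumes D_ne: "D \<noteq> {}" and D_compact: "compact D" and D_convex: "convex D"
    and f_diff: "\<forall>z\<in>D. (f has_derivative (\<lambda>h. grad z \<bullet> h)) (at z)"
    and mu_pos: "\<mu> > 0" and f_sc: "strongly_convex_on \<mu> D f"
    and xstar_in: "xstar \<in> D" and xstar_min: "\<forall>y\<in>D. f xstar \<le> f y"
    and c_pos: "c > 0" and p_pos: "0 < p" and p_le: "p \<le> 1"
    and x0: "x 0 \<in> D" and sbm1: "sbm1 \<in> D"
    and lmo: "\<forall>k. s k \<in> D \<and> (\<forall>t\<in>D. grad (x k) \<bullet> s k \<le> grad (x k) \<bullet> t)"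
    and sbar0: "sbar 0 = sbm1 + (c / (c + 0)) powr p *\<^sub>R (s 0 - sbm1)"
    and sbarS: "\<forall>k. sbar (Suc k) = sbar k + (c / (c + real (Suc k))) powr p *\<^sub>R (s (Suc k) - sbar k)"
    and xS: "\<forall>k. x (Suc k) = x k + (c / (c + real k)) *\<^sub>R (sbar k - x k)"
    and q_pos: "q > 0"
    and rate: "(\<lambda>k. f (x k) - f xstar) \<in> O(\<lambda>k. real k powr (- q))"
  shows "\<exists>C>0. \<forall>k\<ge>1. (norm (sbar k - x k))\<^sup>2
           \<le> C * max (real k powr (- (q / 2 + p - 1))) (real k powr (- 2 * p))"
proof -
  obtain R0 where R0: "\<forall>u\<in>D. norm u \<le> R0"
    using compact_imp_bounded[OF D_compact] unfolding bounded_iff by blast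
  define R where "R = 2 * max R0 0"
  have R0': "R \<ge> 0" unfolding R_def by simp
  have diam: "norm (u - v) \<le> R" if "u \<in> D" "v \<in> D" for u v
  proof -
    have "norm (u - v) \<le> norm u + norm v" by (rule norm_triangle_ineq4)
    moreover have "norm u \<le> R0" "norm v \<le> R0" using R0 that by auto
    ultimately show ?thesis unfolding R_def by linarith
  qed
  have cvx: "a + t *\<^sub>R (b - a) \<in> D" if "a \<in> D" "b \<in> D" "0 \<le> t" "t \<le> 1" for a b t
  proof -
    have "a + t *\<^sub>R (b - a) = (1 - t) *\<^sub>R a + t *\<^sub>R b" by (simp add: algebra_simps)
    then show ?thesis using convexD[OF D_convex that(1,2), of "1-t" t] that by simp
  qed
  have gam: "0 \<le> c / (c + real k) \<and> c / (c + real k) \<le> 1" for k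
    using c_pos by simp
  have bet: "0 \<le> (c / (c + real k)) powr p \<and> (c / (c + real k)) powr p \<le> 1" for k
  proof -
    have "\<bar>c / (c + real k)\<bar> \<le> 1" using c_pos by simp
    then show ?thesis using p_pos powr_le1[of p "c / (c + real k)"] by simp
  qed
  have sbarD: "sbar k \<in> D" for k
  proof (induction k)
    case 0
    have "sbar 0 = s 0" using sbar0 c_pos by simp
    then show ?case using lmo by simp
  next
    case (Suc k)
    then show ?case using sbarS lmo bet[of "Suc k"] cvx by simp
  qed
  have xD: "x k \<in> D" for k
  proof (induction k)
    case 0 then show ?case using x0 .
  next
    case (Suc k)
    then show ?case using xS sbarD gam[of k] cvx by simp
  qed
  define d where "d j = sbar j - x j" for j
  define X where "X j = x j - xstar" for j
  have XS: "\<forall>j. X (Suc j) = X j + (c / (c + real j)) *\<^sub>R d j"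
    using xS unfolding X_def d_def by (simp add: algebra_simps)
  define B where "B = R * (c powr p + c)"
  have B0: "B \<ge> 0" unfolding B_def using R0' c_pos by simp
  have dB: "\<forall>k j. 1 \<le> k \<longrightarrow> k \<le> j \<longrightarrow> norm (d (Suc j) - d j) \<le> B * real k powr (-p)"
  proof (intro allI impI)
    fix k j :: nat assume k1: "1 \<le> k" and kj: "k \<le> j"
    define b where "b = (c / (c + real (Suc j))) powr p"
    define g where "g = c / (c + real j)"
    have eq: "d (Suc j) - d j = b *\<^sub>R (s (Suc j) - sbar j) - g *\<^sub>R d j"
      using sbarS xS unfolding d_def b_def g_def by (simp add: algebra_simps)
    have kpos: "real k > 0" using k1 by simp
    have b_le: "b \<le> c powr p * real k powr (-p)"
    proof -
      have "c / (c + real (Suc j)) \<le> c / real k"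
        using c_pos kpos kj by (intro divide_left_mono) auto
      then have "b \<le> (c / real k) powr p" unfolding b_def using p_pos c_pos
        by (intro powr_mono2) auto
      also have "\<dots> = c powr p * real k powr (-p)"
        using c_pos kpos by (simp add: powr_divide powr_minus_divide)
      finally show ?thesis .
    qed
    have g_le: "g \<le> c * real k powr (-p)"
    proof -
      have "g \<le> c / real k" unfolding g_def
        using c_pos kpos kj by (intro divide_left_mono) auto
      also have "\<dots> = c * real k powr (-1)" using kpos by (simp add: powr_minus_divide)
      also have "\<dots> \<le> c * real k powr (-p)" using c_pos k1 p_le
        by (intro mult_left_mono powr_mono) auto
      finally show ?thesis .
    qed
    have b0: "b \<ge> 0" unfolding b_def by simp
    have g0: "g \<ge> 0" unfolding g_def using c_pos by simp
    have "norm (d (Suc j) - d j) \<le> norm (b *\<^sub>R (s (Suc j) - sbar j)) + norm (g *\<^sub>R d j)"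
      unfolding eq by (rule norm_triangle_ineq4)
    also have "\<dots> = b * norm (s (Suc j) - sbar j) + g * norm (d j)" using b0 g0 by simp
    also have "\<dots> \<le> b * R + g * R"
      using diam[of "s (Suc j)" "sbar j"] diam[of "sbar j" "x j"] lmo sbarD xD b0 g0
      unfolding d_def by (intro add_mono mult_left_mono) auto
    also have "\<dots> \<le> (c powr p * real k powr (-p)) * R + (c * real k powr (-p)) * R"
      using b_le g_le R0' by (intro add_mono mult_right_mono) auto
    also have "\<dots> = B * real k powr (-p)" unfolding B_def by (simp add: algebra_simps)
    finally show "norm (d (Suc j) - d j) \<le> B * real k powr (-p)" .
  qed
  have scb: "\<mu> / 4 * (norm (y - xstar))\<^sup>2 \<le> f y - f xstar" if "y \<in> D" for y
  proof -
    have "f ((1/2) *\<^sub>R y + (1 - 1/2) *\<^sub>R xstar) \<le> 1/2 * f y + (1 - 1/2) * f xstar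
           - \<mu> / 2 * (1/2) * (1 - 1/2) * (norm (y - xstar))\<^sup>2"
    proof -
      have "\<forall>t::real. 0 \<le> t \<and> t \<le> 1 \<longrightarrow> f (t *\<^sub>R y + (1 - t) *\<^sub>R xstar) \<le> t * f y + (1 - t) * f xstar - \<mu> / 2 * t * (1 - t) * (norm (y - xstar))\<^sup>2"
        using f_sc that xstar_in unfolding strongly_convex_on_def by blast
      from spec[OF this, of "1/2"] show ?thesis by simp
    qed
    moreover have "(1/2) *\<^sub>R y + (1 - 1/2) *\<^sub>R xstar \<in> D"
      using convexD[OF D_convex that xstar_in, of "1/2" "1 - 1/2"] by simp
    ultimately show ?thesis using xstar_min by fastforce
  qed
  obtain Cr where Cr: "Cr > 0" and ev: "eventually (\<lambda>k. norm (f (x k) - f xstar) \<le> Cr * norm (real k powr (- q))) at_top"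
    using landau_o.bigE[OF rate] by blast
  then obtain N where N: "\<forall>k\<ge>N. norm (f (x k) - f xstar) \<le> Cr * norm (real k powr (- q))"
    unfolding eventually_at_top_linorder by blast
  define E where "E = max (sqrt (4 * Cr / \<mu>)) (R * real N powr (q/2))"
  have E0: "E \<ge> 0" unfolding E_def using Cr mu_pos by (simp add: le_max_iff_disj)
  have XE: "\<forall>j\<ge>1. norm (X j) \<le> E * real j powr (-q/2)"
  proof (intro allI impI)
    fix j :: nat assume j1: "1 \<le> j"
    have jpos: "real j > 0" using j1 by simp
    have sq: "real j powr (-q/2) * real j powr (-q/2) = real j powr (-q)"
      by (simp add: powr_add[symmetric])
    show "norm (X j) \<le> E * real j powr (-q/2)"
    proof (cases "j \<ge> N")
      case True
      have "\<mu> / 4 * (norm (X j))\<^sup>2 \<le> Cr * real j powr (-q)"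
        using scb[OF xD[of j]] N True unfolding X_def by fastforce
      then have h: "(norm (X j))\<^sup>2 \<le> (4 * Cr / \<mu>) * real j powr (-q)"
        using mu_pos by (simp add: field_simps)
      have "norm (X j) \<le> sqrt (4 * Cr / \<mu>) * real j powr (-q/2)"
      proof (rule ccontr)
        assume "\<not> ?thesis"
        then have lt: "sqrt (4 * Cr / \<mu>) * real j powr (-q/2) < norm (X j)" by simp
        have "0 \<le> sqrt (4 * Cr / \<mu>) * real j powr (-q/2)" using Cr mu_pos by simp
        then have "(sqrt (4 * Cr / \<mu>) * real j powr (-q/2))\<^sup>2 < (norm (X j))\<^sup>2"
          using lt by (intro power_strict_mono) auto
        also have "(sqrt (4 * Cr / \<mu>) * real j powr (-q/2))\<^sup>2 = (4 * Cr / \<mu>) * real j powr (-q)"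
        proof -
          define a where "a = 4 * Cr / \<mu>"
          define t where "t = real j powr (-q/2)"
          have h1: "(sqrt a * t)\<^sup>2 = (sqrt a * sqrt a) * (t * t)" by (simp add: power2_eq_square algebra_simps)
          have h2: "sqrt a * sqrt a = a" using Cr mu_pos unfolding a_def by simp
          show ?thesis using h1 h2 sq Cr mu_pos unfolding a_def t_def by simp
        qed
        finally show False using h by simp
      qed
      also have "\<dots> \<le> E * real j powr (-q/2)" unfolding E_def by (intro mult_right_mono) auto
      finally show ?thesis .
    next
      case False
      have "norm (X j) \<le> R" using diam[OF xD xstar_in] unfolding X_def by simp
      also have "R = R * (real j powr (q/2) * real j powr (-q/2))"
        using jpos by (simp add: powr_add[symmetric])
      also have "\<dots> \<le> R * (real N powr (q/2) * real j powr (-q/2))"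
        using False jpos q_pos R0' by (intro mult_left_mono mult_right_mono powr_mono2) auto
      also have "\<dots> \<le> E * real j powr (-q/2)"
        unfolding E_def by (simp add: mult.assoc[symmetric] mult_right_mono)
      finally show ?thesis .
    qed
  qed
  define A where "A = 2*E*(c+2)/c"
  have A0: "A \<ge> 0" unfolding A_def using E0 c_pos by simp
  show ?thesis
  proof (intro exI[of _ "(A + 2*B)\<^sup>2 + 1"] conjI allI impI)
    show "(A + 2*B)\<^sup>2 + 1 > 0" by (smt (verit) zero_le_power2)
    fix k :: nat assume k1: "1 \<le> k"
    obtain L where L: "1 \<le> L" "L \<le> k" and
      LL: "(A * real k powr (1 - q/2) / real L + real L * (B * real k powr (-p)))\<^sup>2
       \<le> (A + 2*B)\<^sup>2 * max (real k powr (- (q / 2 + p - 1))) (real k powr (- 2 * p))"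
      using choose_L[OF A0 B0 p_pos p_le q_pos k1] by blast
    have nd: "norm (d k) \<le> A * real k powr (1 - q/2) / real L + real L * (B * real k powr (-p))"
      using core[OF c_pos XS dB XE B0 E0 q_pos k1 L] unfolding A_def by simp
    have "(norm (d k))\<^sup>2 \<le> (A * real k powr (1 - q/2) / real L + real L * (B * real k powr (-p)))\<^sup>2"
      using nd by (intro power_mono) auto
    also have "\<dots> \<le> (A + 2*B)\<^sup>2 * max (real k powr (- (q / 2 + p - 1))) (real k powr (- 2 * p))" by (rule LL)
    also have "\<dots> \<le> ((A + 2*B)\<^sup>2 + 1) * max (real k powr (- (q / 2 + p - 1))) (real k powr (- 2 * p))"
      by (intro mult_right_mono) (auto simp: le_max_iff_disj)
    finally show "(norm (sbar k - x k))\<^sup>2 \<le> ((A + 2*B)\<^sup>2 + 1) * max (real k powr (- (q / 2 + p - 1))) (real k powr (- 2 * p))"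
      unfolding d_def .
  qed
qed

end
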